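(* Let $u$ be as in the standing assumption of the context. Then at every point $(x,t)\in\hat\Omega$ where $u(x,t)<0$ we have \[v\,u^2\le\max_{\{(y,0)\in\hat\Omega\colon u(y,0)<0\}} v\,u^2 .\]
   Context: Standing assumption: $\hat\Omega\subset\mathbb{R}^{n+1}\times[0,\infty)$ is a (relatively) open set and $u\colon\hat\Omega\to\mathbb{R}$ is a smooth solution of $\dot u=\sqrt{1+|Du|^2}\,\mathrm{div}\!\left(\frac{Du}{\sqrt{1+|Du|^2}}\right)$ in $\hat\Omega\cap(\mathbb{R}^{n+1}\times(0,\infty))$; $u(x,t)\to0$ as $(x,t)\to(x_0,t_0)\in\partial\hat\Omega$; for every $T>0$ all derivatives of $u$ are uniformly bounded on $\hat\Omega\cap(\mathbb{R}^{n+1}\times[0,T])$ and extend continuously across the boundary, and $\hat\Omega\cap(\mathbb{R}^{n+1}\times[0,T])$ is bounded. Here $v:=\sqrt{1+|Du|^2}$ (equivalently $v=(-\langle e_{n+2},\nu\rangle)^{-1}$ for the downward unit normal $\nu$ of $\operatorname{graph}u(\cdot,t)\subset\mathbb{R}^{n+2}$). *)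

theory Defs
  imports "HOL-Analysis.Analysis"
begin

text \<open>Points of space-time are pairs (x,t) with x in a Euclidean space 'a (playing the
role of R^{n+1}) and t real.  Derivatives are taken within the domain, so that they also make
sense (one-sidedly) on the initial time slice t = 0.\<close>

fun pderivs :: "('a::real_normed_vector \<Rightarrow> real) \<Rightarrow> 'a set \<Rightarrow> 'a list \<Rightarrow> 'a \<Rightarrow> real" where
  "pderivs f S [] = f"
| "pderivs f S (h # hs) = (\<lambda>p. frechet_derivative (pderivs f S hs) (at p within S) h)"

definition gradx :: "('a::euclidean_space \<times> real \<Rightarrow> real) \<Rightarrow> ('a \<times> real) set \<Rightarrow> 'a \<times> real \<Rightarrow> 'a" where
  "gradx U S p = (\<Sum>b\<in>Basis. pderivs U S [(b, 0)] p *\<^sub>R b)"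

definition vfac :: "('a::euclidean_space \<times> real \<Rightarrow> real) \<Rightarrow> ('a \<times> real) set \<Rightarrow> 'a \<times> real \<Rightarrow> real" where
  "vfac U S p = sqrt (1 + (norm (gradx U S p))\<^sup>2)"

definition gmcf_at :: "('a::euclidean_space \<times> real \<Rightarrow> real) \<Rightarrow> ('a \<times> real) set \<Rightarrow> 'a \<times> real \<Rightarrow> bool" where
  "gmcf_at U S p \<longleftrightarrow>
     pderivs U S [(0, 1)] p =
       vfac U S p * (\<Sum>b\<in>Basis. frechet_derivative
          (\<lambda>q. pderivs U S [(b, 0)] q / vfac U S q) (at p within S) (b, 0))"

definition standing_assumption :: "('a::euclidean_space \<times> real) set \<Rightarrow> ('a \<Rightarrow> real \<Rightarrow> real) \<Rightarrow> bool" where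
  "standing_assumption \<Omega> u \<longleftrightarrow>
     (let U = (\<lambda>p. u (fst p) (snd p)); H = {p :: 'a \<times> real. snd p \<ge> 0} in
       \<Omega> \<subseteq> H \<and> openin (top_of_set H) \<Omega>
     \<comment> \<open>smoothness: derivatives of all orders exist on Omega-hat\<close>
     \<and> (\<forall>hs. \<forall>p\<in>\<Omega>. pderivs U \<Omega> hs differentiable (at p within \<Omega>))
     \<comment> \<open>the PDE for t > 0\<close>
     \<and> (\<forall>p\<in>\<Omega>. snd p > 0 \<longrightarrow> gmcf_at U \<Omega> p)
     \<comment> \<open>zero boundary values; the boundary is the relative boundary in R^{n+1} x [0,inf)\<close>
     \<and> (\<forall>p0 \<in> closure \<Omega> - \<Omega>. (U \<longlongrightarrow> 0) (at p0 within \<Omega>))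
     \<comment> \<open>for every T > 0: bounded domain slab, bounded derivatives, continuous extension\<close>
     \<and> (\<forall>T>0. bounded {p\<in>\<Omega>. snd p \<le> T}
          \<and> (\<forall>hs. \<exists>M. \<forall>p\<in>\<Omega>. snd p \<le> T \<longrightarrow> \<bar>pderivs U \<Omega> hs p\<bar> \<le> M)
          \<and> (\<forall>hs. \<forall>p0 \<in> closure {p\<in>\<Omega>. snd p \<le> T} - \<Omega>.
                 \<exists>l. (pderivs U \<Omega> hs \<longlongrightarrow> l) (at p0 within {p\<in>\<Omega>. snd p \<le> T}))))"

end

theory Submission
  imports Defs "HOL-Analysis.Analysis"
begin

lemma dist_add_self: "dist x (x + v) = norm v" for x v :: "'b::real_normed_vector"
  by (simp add: dist_norm)

lemma deriv_line:
  fixes f :: "'b::real_normed_vector \<Rightarrow> real"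
  assumes "(f has_derivative L) (at (a + r *\<^sub>R k))"
  shows "((\<lambda>r. f (a + r *\<^sub>R k)) has_real_derivative L k) (at r)"
proof -
  have l: "linear L" using assms has_derivative_linear by blast
  have "((\<lambda>r. a + r *\<^sub>R k) has_derivative (\<lambda>r. r *\<^sub>R k)) (at r)"
    by (auto intro!: derivative_eq_intros)
  from has_derivative_compose[OF this assms]
  have "((\<lambda>r. f (a + r *\<^sub>R k)) has_derivative (\<lambda>r. L (r *\<^sub>R k))) (at r)" by (simp add: o_def)
  moreover have "(\<lambda>r. L (r *\<^sub>R k)) = (*) (L k)"
    using linear_scale[OF l] by (auto simp: fun_eq_iff mult.commute)
  ultimately show ?thesis by (simp add: has_field_derivative_def)
qed

lemma delta_est:
  fixes f :: "'b::real_normed_vector \<Rightarrow> real"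
  assumes S: "open S" "x \<in> S"
    and df: "\<And>y. y \<in> S \<Longrightarrow> (f has_derivative f' y) (at y)"
    and dk: "((\<lambda>y. f' y k) has_derivative gk) (at x)"
    and e: "e > 0"
  shows "\<exists>d>0. \<forall>s. 0 < s \<and> s < d \<longrightarrow>
     \<bar>f (x + s *\<^sub>R h + s *\<^sub>R k) - f (x + s *\<^sub>R h) - f (x + s *\<^sub>R k) + f x - s\<^sup>2 * gk h\<bar>
        \<le> e * s\<^sup>2 * (norm h + 2 * norm k)"
proof -
  from dk[unfolded has_derivative_at_alt] e obtain d0 where d0: "d0 > 0" and
    R: "\<And>y. norm (y - x) < d0 \<Longrightarrow> norm (f' y k - f' x k - gk (y - x)) \<le> e * norm (y - x)"
    and bl: "bounded_linear gk" by blast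
  have lgk: "linear gk" using bl bounded_linear.linear by blast
  from S obtain r0 where r0: "r0 > 0" "ball x r0 \<subseteq> S" using open_contains_ball by blast
  define d where "d = min d0 r0 / (norm h + norm k + 1)"
  have np: "norm h + norm k + 1 > 0" by (smt (verit) norm_ge_zero)
  have dpos: "d > 0" unfolding d_def using d0 r0 np by simp
  have key: "norm (s *\<^sub>R h + r *\<^sub>R k) < min d0 r0" if "0 < s" "s < d" "0 \<le> r" "r \<le> s" for s r
  proof -
    have "norm (s *\<^sub>R h + r *\<^sub>R k) \<le> s * norm h + r * norm k"
      using norm_triangle_ineq[of "s *\<^sub>R h" "r *\<^sub>R k"] that by simp
    also have "\<dots> \<le> s * (norm h + norm k + 1) - s" using that
      by (simp add: algebra_simps mult_right_mono)
    also have "\<dots> < s * (norm h + norm k + 1)" using that by simp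
    also have "\<dots> < d * (norm h + norm k + 1)"
      using that np by (intro mult_strict_right_mono) auto
    also have "\<dots> = min d0 r0" unfolding d_def using np by simp
    finally show ?thesis .
  qed
  show ?thesis
  proof (intro exI[of _ d] conjI dpos allI impI)
    fix s :: real assume s: "0 < s \<and> s < d"
    define \<phi> where "\<phi> = (\<lambda>r. f (x + s *\<^sub>R h + r *\<^sub>R k) - f (x + r *\<^sub>R k))"
    have inS: "x + s *\<^sub>R h + r *\<^sub>R k \<in> S" "x + r *\<^sub>R k \<in> S" if "0 \<le> r" "r \<le> s" for r
    proof -
      have "norm (s *\<^sub>R h + r *\<^sub>R k) < r0" using key[of s r] that s by simp
      then have "x + (s *\<^sub>R h + r *\<^sub>R k) \<in> ball x r0" unfolding mem_ball dist_add_self .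
      then show "x + s *\<^sub>R h + r *\<^sub>R k \<in> S" using r0 by (auto simp: add.assoc)
      have "norm (r *\<^sub>R k) \<le> s * norm k" using that by (simp add: mult_right_mono)
      also have "\<dots> \<le> s * (norm h + norm k + 1)" using that s by (intro mult_left_mono) auto
      also have "\<dots> < d * (norm h + norm k + 1)" using s np by (intro mult_strict_right_mono) auto
      also have "\<dots> \<le> r0" unfolding d_def using np by simp
      finally have "x + (r *\<^sub>R k) \<in> ball x r0" unfolding mem_ball dist_add_self .
      then show "x + r *\<^sub>R k \<in> S" using r0 by auto
    qed
    have "\<exists>z. 0 < z \<and> z < s \<and> \<phi> s - \<phi> 0 = (s - 0) * (f' (x + s *\<^sub>R h + z *\<^sub>R k) k - f' (x + z *\<^sub>R k) k)"
    proof (rule MVT2[where f' = "\<lambda>z. f' (x + s *\<^sub>R h + z *\<^sub>R k) k - f' (x + z *\<^sub>R k) k"])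
      show "0 < s" using s by simp
      fix r assume r: "0 \<le> r" "r \<le> s"
      have a: "((\<lambda>r. f ((x + s *\<^sub>R h) + r *\<^sub>R k)) has_real_derivative f' (x + s *\<^sub>R h + r *\<^sub>R k) k) (at r)"
        by (rule deriv_line) (use df inS r in auto)
      have b: "((\<lambda>r. f (x + r *\<^sub>R k)) has_real_derivative f' (x + r *\<^sub>R k) k) (at r)"
        by (rule deriv_line) (use df inS r in auto)
      show "(\<phi> has_real_derivative f' (x + s *\<^sub>R h + r *\<^sub>R k) k - f' (x + r *\<^sub>R k) k) (at r)"
        unfolding \<phi>_def using DERIV_diff[OF a b] by simp
    qed
    then obtain z where z: "0 < z" "z < s" and
      eq: "\<phi> s - \<phi> 0 = s * (f' (x + s *\<^sub>R h + z *\<^sub>R k) k - f' (x + z *\<^sub>R k) k)" by auto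
    have n1: "norm ((x + s *\<^sub>R h + z *\<^sub>R k) - x) < d0" using key[of s z] s z by (simp add: add.assoc)
    have "norm (z *\<^sub>R k) \<le> s * norm k" using s z by (simp add: mult_right_mono)
    also have "\<dots> \<le> s * (norm h + norm k + 1)" using z s by (intro mult_left_mono) auto
    also have "\<dots> < d * (norm h + norm k + 1)" using s np by (intro mult_strict_right_mono) auto
    also have "\<dots> \<le> d0" unfolding d_def using np by simp
    finally have n2: "norm ((x + z *\<^sub>R k) - x) < d0" by simp
    define R1 where "R1 = f' (x + s *\<^sub>R h + z *\<^sub>R k) k - f' x k - gk (s *\<^sub>R h + z *\<^sub>R k)"
    define R2 where "R2 = f' (x + z *\<^sub>R k) k - f' x k - gk (z *\<^sub>R k)"
    have b1: "\<bar>R1\<bar> \<le> e * norm (s *\<^sub>R h + z *\<^sub>R k)" using R[OF n1] unfolding R1_def by (simp add: add.assoc)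
    have b2: "\<bar>R2\<bar> \<le> e * norm (z *\<^sub>R k)" using R[OF n2] unfolding R2_def by simp
    have nn1: "norm (s *\<^sub>R h + z *\<^sub>R k) \<le> s * norm h + s * norm k"
      using norm_triangle_ineq[of "s *\<^sub>R h" "z *\<^sub>R k"] s z
      by (simp add: mult_right_mono order_trans)
    have nn2: "norm (z *\<^sub>R k) \<le> s * norm k" using s z by (simp add: mult_right_mono)
    have lin: "gk (s *\<^sub>R h + z *\<^sub>R k) - gk (z *\<^sub>R k) = s * gk h"
      using linear_add[OF lgk] linear_scale[OF lgk] by simp
    have "f' (x + s *\<^sub>R h + z *\<^sub>R k) k - f' (x + z *\<^sub>R k) k = s * gk h + R1 - R2"
      unfolding R1_def R2_def using lin by simp
    then have "\<phi> s - \<phi> 0 = s * (s * gk h + R1 - R2)" using eq by simp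
    then have "\<phi> s - \<phi> 0 - s\<^sup>2 * gk h = s * (R1 - R2)" by (simp add: power2_eq_square algebra_simps)
    moreover have "\<bar>R1 - R2\<bar> \<le> e * s * (norm h + 2 * norm k)"
    proof -
      have "\<bar>R1 - R2\<bar> \<le> \<bar>R1\<bar> + \<bar>R2\<bar>" by simp
      also have "\<dots> \<le> e * (s * norm h + s * norm k) + e * (s * norm k)"
        using b1 b2 nn1 nn2 e by (smt (verit) mult_left_mono)
      finally show ?thesis by (simp add: algebra_simps)
    qed
    ultimately have "\<bar>\<phi> s - \<phi> 0 - s\<^sup>2 * gk h\<bar> \<le> s * (e * s * (norm h + 2 * norm k))"
      using s by (simp add: abs_mult mult_left_mono)
    then show "\<bar>f (x + s *\<^sub>R h + s *\<^sub>R k) - f (x + s *\<^sub>R h) - f (x + s *\<^sub>R k) + f x - s\<^sup>2 * gk h\<bar>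
        \<le> e * s\<^sup>2 * (norm h + 2 * norm k)"
      unfolding \<phi>_def by (simp add: power2_eq_square algebra_simps)
  qed
qed

lemma schwarz:
  fixes f :: "'b::real_normed_vector \<Rightarrow> real"
  assumes S: "open S" "x \<in> S"
    and df: "\<And>y. y \<in> S \<Longrightarrow> (f has_derivative f' y) (at y)"
    and dh: "((\<lambda>y. f' y h) has_derivative gh) (at x)"
    and dk: "((\<lambda>y. f' y k) has_derivative gk) (at x)"
  shows "gk h = gh k"
proof (rule ccontr)
  assume ne: "gk h \<noteq> gh k"
  define C where "C = 2 * (norm h + norm k) + 1"
  have Cpos: "C > 0" unfolding C_def by (simp add: add_nonneg_pos)
  define e where "e = \<bar>gk h - gh k\<bar> / (2 * C)"
  have e: "e > 0" using ne Cpos unfolding e_def by simp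
  obtain d1 where d1: "d1 > 0" and A: "\<And>s. 0 < s \<Longrightarrow> s < d1 \<Longrightarrow>
     \<bar>f (x + s *\<^sub>R h + s *\<^sub>R k) - f (x + s *\<^sub>R h) - f (x + s *\<^sub>R k) + f x - s\<^sup>2 * gk h\<bar>
        \<le> e * s\<^sup>2 * (norm h + 2 * norm k)"
    using delta_est[OF S df dk e, of h] by blast
  obtain d2 where d2: "d2 > 0" and B: "\<And>s. 0 < s \<Longrightarrow> s < d2 \<Longrightarrow>
     \<bar>f (x + s *\<^sub>R k + s *\<^sub>R h) - f (x + s *\<^sub>R k) - f (x + s *\<^sub>R h) + f x - s\<^sup>2 * gh k\<bar>
        \<le> e * s\<^sup>2 * (norm k + 2 * norm h)"
    using delta_est[OF S df dh e, of k] by blast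
  define s where "s = min d1 d2 / 2"
  have s: "0 < s" "s < d1" "s < d2" using d1 d2 unfolding s_def by auto
  have eqx: "x + s *\<^sub>R k + s *\<^sub>R h = x + s *\<^sub>R h + s *\<^sub>R k" by (simp add: algebra_simps)
  have "\<bar>s\<^sup>2 * gk h - s\<^sup>2 * gh k\<bar> \<le> e * s\<^sup>2 * (norm h + 2 * norm k) + e * s\<^sup>2 * (norm k + 2 * norm h)"
    using A[OF s(1,2)] B[OF s(1,3)] unfolding eqx by linarith
  also have "\<dots> = e * s\<^sup>2 * ((norm h + 2 * norm k) + (norm k + 2 * norm h))" by (simp add: algebra_simps)
  also have "\<dots> < e * s\<^sup>2 * (2 * C)"
  proof (rule mult_strict_left_mono)
    have g: "\<And>a b::real. 0\<le>a \<Longrightarrow> 0\<le>b \<Longrightarrow> (a + 2*b) + (b+2*a) < 2*(2*(a+b)+1)" by (smt (verit))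
    show "norm h + 2 * norm k + (norm k + 2 * norm h) < 2 * C" unfolding C_def by (rule g) auto
    show "0 < e * s\<^sup>2" using e s by simp
  qed
  finally have "s\<^sup>2 * \<bar>gk h - gh k\<bar> < s\<^sup>2 * \<bar>gk h - gh k\<bar>"
    unfolding e_def using Cpos by (simp add: abs_mult right_diff_distrib[symmetric])
  then show False by simp
qed

lemma bil_sum_l:
  fixes B :: "'a::euclidean_space \<Rightarrow> 'a \<Rightarrow> real"
  assumes "bilinear B"
  shows "(\<Sum>b\<in>Basis. (p \<bullet> b) * B b y) = B p y"
proof -
  have l: "linear (\<lambda>x. B x y)" using assms by (simp add: bilinear_def)
  have "B p y = B (\<Sum>b\<in>Basis. (p \<bullet> b) *\<^sub>R b) y" by (simp add: euclidean_representation)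
  also have "\<dots> = (\<Sum>b\<in>Basis. B ((p \<bullet> b) *\<^sub>R b) y)" using linear_sum[OF l] by (simp add: o_def)
  also have "\<dots> = (\<Sum>b\<in>Basis. (p \<bullet> b) * B b y)" using bilinear_lmul[OF assms] by simp
  finally show ?thesis by simp
qed

lemma bil_sum_r:
  fixes B :: "'a::euclidean_space \<Rightarrow> 'a \<Rightarrow> real"
  assumes "bilinear B"
  shows "(\<Sum>b\<in>Basis. (p \<bullet> b) * B y b) = B y p"
proof -
  have "bilinear (\<lambda>x y. B y x)" using assms by (simp add: bilinear_def)
  from bil_sum_l[OF this] show ?thesis .
qed

lemma norm_sq_basis: "(norm p)\<^sup>2 = (\<Sum>b\<in>Basis. (p \<bullet> b)\<^sup>2)" for p :: "'a::euclidean_space"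
  unfolding power2_norm_eq_inner by (subst euclidean_inner) (simp add: power2_eq_square)

lemma qtrick:
  fixes B :: "'a::euclidean_space \<Rightarrow> 'a \<Rightarrow> real" and p :: 'a
  assumes bB: "bilinear B"
  defines "v \<equiv> sqrt (1 + (norm p)\<^sup>2)"
  defines "q \<equiv> (\<lambda>b. b - ((b \<bullet> p) / (v * (v + 1))) *\<^sub>R p)"
  shows "(\<Sum>b\<in>Basis. B (q b) (q b)) = (\<Sum>b\<in>Basis. B b b) - B p p / v\<^sup>2"
proof -
  define \<kappa> where "\<kappa> = 1 / (v * (v + 1))"
  have v1: "v \<ge> 1" unfolding v_def by simp
  have vsq: "v\<^sup>2 = 1 + (norm p)\<^sup>2" unfolding v_def by simp
  have vp: "0 < v" using v1 by simp
  have vv: "0 < v * v" "0 < v * (v * v)" using vp by simp_all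
  have vnz: "v \<noteq> 0" "v + 1 \<noteq> 0" "v + v * v \<noteq> 0" "v * v + v * (v * v) \<noteq> 0"
    using vp vv by linarith+
  have qe: "q b = b - (\<kappa> * (p \<bullet> b)) *\<^sub>R p" for b unfolding q_def \<kappa>_def by (simp add: inner_commute)
  have exp: "B (q b) (q b) = B b b - \<kappa> * ((p \<bullet> b) * B b p) - \<kappa> * ((p \<bullet> b) * B p b) + \<kappa>\<^sup>2 * (p \<bullet> b)\<^sup>2 * B p p" for b
    unfolding qe using bB
    by (simp add: bilinear_lsub bilinear_rsub bilinear_lmul bilinear_rmul power2_eq_square algebra_simps)
  have "(\<Sum>b\<in>Basis. B (q b) (q b)) = (\<Sum>b\<in>Basis. B b b) - \<kappa> * (\<Sum>b\<in>Basis. (p \<bullet> b) * B b p)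
     - \<kappa> * (\<Sum>b\<in>Basis. (p \<bullet> b) * B p b) + \<kappa>\<^sup>2 * (\<Sum>b\<in>Basis. (p \<bullet> b)\<^sup>2) * B p p"
    unfolding exp by (simp add: sum.distrib sum_subtractf sum_distrib_left sum_distrib_right mult.assoc)
  also have "\<dots> = (\<Sum>b\<in>Basis. B b b) - (2 * \<kappa> - \<kappa>\<^sup>2 * (norm p)\<^sup>2) * B p p"
    using bil_sum_l[OF bB] bil_sum_r[OF bB] norm_sq_basis[of p] by (simp add: algebra_simps)
  also have "2 * \<kappa> - \<kappa>\<^sup>2 * (norm p)\<^sup>2 = 1 / v\<^sup>2"
  proof -
    have np: "(norm p)\<^sup>2 = v\<^sup>2 - 1" using vsq by simp
    have a: "\<kappa> * (v\<^sup>2 - 1) = (v - 1) / v" unfolding \<kappa>_def using v1 vnz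
      by (simp add: power2_eq_square field_simps)
    have "2 * \<kappa> - \<kappa>\<^sup>2 * (norm p)\<^sup>2 = \<kappa> * (2 - \<kappa> * (v\<^sup>2 - 1))" unfolding np
      by (simp add: power2_eq_square algebra_simps)
    also have "\<dots> = \<kappa> * ((v + 1) / v)" unfolding a using v1 vnz by (simp add: field_simps)
    also have "\<dots> = 1 / v\<^sup>2" unfolding \<kappa>_def using v1 vnz by (simp add: field_simps power2_eq_square)
    finally show ?thesis .
  qed
  finally show ?thesis by simp
qed

lemma scal:
  fixes u v P S trH trJ Jpp \<mu> \<epsilon> :: real
  assumes u: "u < 0" and v: "v > 0" and vsq: "v\<^sup>2 = 1 + P" and P: "P \<ge> 0"
    and mu: "\<mu> = - 2 * v\<^sup>2 / u"
    and CS: "\<mu>\<^sup>2 * P \<le> P * S" and S: "S \<ge> 0"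
    and trB: "(u\<^sup>2 / v * S + u\<^sup>2 / v * trJ + (- u\<^sup>2 * \<mu>\<^sup>2 / v^3 + 4 * u * \<mu> / v + 2 * v) * P + 2 * u * v * trH)
       - (u\<^sup>2 / v * (\<mu>\<^sup>2 * P) + u\<^sup>2 / v * Jpp + (- u\<^sup>2 * \<mu>\<^sup>2 / v^3 + 4 * u * \<mu> / v + 2 * v) * P\<^sup>2 + 2 * u * v * (\<mu> * P)) / v\<^sup>2 \<le> 0"
    and wt: "\<epsilon> \<le> u\<^sup>2 * (trJ - (2 * (\<mu>\<^sup>2 * P) + Jpp) / v\<^sup>2 + 2 * (\<mu> * P)\<^sup>2 / v^4) / v
               + 2 * u * v * (trH - \<mu> * P / v\<^sup>2)"
    and e: "\<epsilon> > 0"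
  shows False
proof -
  have Pe: "P = v\<^sup>2 - 1" using vsq by simp
  have un: "u \<noteq> 0" using u by simp
  have vn: "v \<noteq> 0" using v by simp
  have umu: "u * \<mu> = - 2 * v\<^sup>2" using un unfolding mu by simp
  have umu2: "u\<^sup>2 * \<mu>\<^sup>2 = 4 * v^4"
  proof -
    have "u\<^sup>2 * \<mu>\<^sup>2 = (u * \<mu>)\<^sup>2" by (simp add: power_mult_distrib)
    also have "\<dots> = 4 * v^4" unfolding umu by (simp add: power_mult_distrib power2_eq_square power4_eq_xxxx)
    finally show ?thesis .
  qed
  define W where "W = u\<^sup>2 * (trJ - (2 * (\<mu>\<^sup>2 * P) + Jpp) / v\<^sup>2 + 2 * (\<mu> * P)\<^sup>2 / v^4) / v
               + 2 * u * v * (trH - \<mu> * P / v\<^sup>2)"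
  define T where "T = (u\<^sup>2 / v * S + u\<^sup>2 / v * trJ + (- u\<^sup>2 * \<mu>\<^sup>2 / v^3 + 4 * u * \<mu> / v + 2 * v) * P + 2 * u * v * trH)
       - (u\<^sup>2 / v * (\<mu>\<^sup>2 * P) + u\<^sup>2 / v * Jpp + (- u\<^sup>2 * \<mu>\<^sup>2 / v^3 + 4 * u * \<mu> / v + 2 * v) * P\<^sup>2 + 2 * u * v * (\<mu> * P)) / v\<^sup>2"
  have id: "W - T = - u\<^sup>2 * S / v + 4 * v * P + 2 * P / v"
  proof -
    have a: "u\<^sup>2 * (\<mu>\<^sup>2 * P) = 4 * v^4 * P" "u\<^sup>2 * (\<mu> * P)\<^sup>2 = 4 * v^4 * P\<^sup>2"
      "u * (\<mu> * P) = - 2 * v\<^sup>2 * P" "u * \<mu> = - 2 * v\<^sup>2"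
    proof -
      show "u\<^sup>2 * (\<mu>\<^sup>2 * P) = 4 * v^4 * P" using umu2 by (metis mult.assoc)
      have "u\<^sup>2 * (\<mu> * P)\<^sup>2 = (u\<^sup>2 * \<mu>\<^sup>2) * P\<^sup>2" by (simp add: power_mult_distrib)
      then show "u\<^sup>2 * (\<mu> * P)\<^sup>2 = 4 * v^4 * P\<^sup>2" using umu2 by simp
      show "u * (\<mu> * P) = - 2 * v\<^sup>2 * P" using umu by (metis mult.assoc)
      show "u * \<mu> = - 2 * v\<^sup>2" by (rule umu)
    qed
    have "W - T = (u\<^sup>2 * trJ - u\<^sup>2 * (2 * (\<mu>\<^sup>2 * P)) / v\<^sup>2 - u\<^sup>2 * Jpp / v\<^sup>2 + 2 * (u\<^sup>2 * (\<mu> * P)\<^sup>2) / v^4) / v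
               + 2 * v * (u * trH) - 2 * v * (u * (\<mu> * P)) / v\<^sup>2
          - ((u\<^sup>2 / v * S + u\<^sup>2 / v * trJ + (- (u\<^sup>2 * \<mu>\<^sup>2) / v^3 + 4 * (u * \<mu>) / v + 2 * v) * P + 2 * v * (u * trH))
       - (u\<^sup>2 * (\<mu>\<^sup>2 * P) / v + u\<^sup>2 / v * Jpp + (- (u\<^sup>2 * \<mu>\<^sup>2) / v^3 + 4 * (u * \<mu>) / v + 2 * v) * P\<^sup>2 + 2 * v * (u * (\<mu> * P))) / v\<^sup>2)"
      unfolding W_def T_def by (simp add: algebra_simps diff_divide_distrib add_divide_distrib)
    also have "\<dots> = (u\<^sup>2 * trJ - 2 * (4 * v^4 * P) / v\<^sup>2 - u\<^sup>2 * Jpp / v\<^sup>2 + 2 * (4 * v^4 * P\<^sup>2) / v^4) / v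
               + 2 * v * (u * trH) - 2 * v * (- 2 * v\<^sup>2 * P) / v\<^sup>2
          - ((u\<^sup>2 / v * S + u\<^sup>2 / v * trJ + (- (4 * v^4) / v^3 + 4 * (- 2 * v\<^sup>2) / v + 2 * v) * P + 2 * v * (u * trH))
       - (4 * v^4 * P / v + u\<^sup>2 / v * Jpp + (- (4 * v^4) / v^3 + 4 * (- 2 * v\<^sup>2) / v + 2 * v) * P\<^sup>2 + 2 * v * (- 2 * v\<^sup>2 * P)) / v\<^sup>2)"
      unfolding a umu2 using umu2 by (simp add: mult.commute)
    also have "\<dots> = - u\<^sup>2 * S / v + 6 * v * P - 2 * P\<^sup>2 / v"
      using vn by (simp add: field_simps power2_eq_square power4_eq_xxxx power3_eq_cube)
    also have "\<dots> = - u\<^sup>2 * S / v + 4 * v * P + 2 * P / v"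
    proof -
      have "6 * v * P - 2 * P\<^sup>2 / v = 4 * v * P + 2 * P / v"
        using vn unfolding Pe by (simp add: field_simps power2_eq_square)
      then show ?thesis by simp
    qed
    finally show ?thesis .
  qed
  have bound: "- u\<^sup>2 * S / v + 4 * v * P + 2 * P / v \<le> 0"
  proof (cases "P = 0")
    case True then show ?thesis using S v by simp
  next
    case False
    then have Pp: "P > 0" using P by simp
    have "\<mu>\<^sup>2 \<le> S" using CS Pp by (simp add: mult.commute)
    then have "u\<^sup>2 * \<mu>\<^sup>2 \<le> u\<^sup>2 * S" by (simp add: mult_left_mono)
    then have "4 * v^4 \<le> u\<^sup>2 * S" using umu2 by simp
    then have "4 * v^4 / v \<le> u\<^sup>2 * S / v" using v by (simp add: divide_right_mono)
    moreover have "4 * v^4 / v = 4 * v * (1 + P) " using vn vsq by (simp add: power2_eq_square power4_eq_xxxx)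
    moreover have "2 * P / v \<le> 4 * v" 
    proof -
      have "2 * P \<le> 4 * v\<^sup>2" using vsq P by simp
      then show ?thesis using v by (simp add: divide_le_eq power2_eq_square mult.assoc)
    qed
    ultimately show ?thesis by (simp add: algebra_simps)
  qed
  have "\<epsilon> \<le> W" using wt unfolding W_def .
  moreover have "T \<le> 0" using trB unfolding T_def .
  ultimately show False using id bound e by linarith
qed

lemma bl_prod:
  assumes lf: "linear f" and lg: "linear g"
  shows "bilinear (\<lambda>h k. (f h::real) * g k)"
  unfolding bilinear_def linear_iff
  by (simp add: linear_add[OF lf] linear_scale[OF lf] linear_add[OF lg] linear_scale[OF lg] algebra_simps)

lemma bl_prod':
  assumes lf: "linear f" and lg: "linear g"
  shows "bilinear (\<lambda>h k. (g k::real) * f h)"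
  unfolding bilinear_def linear_iff
  by (simp add: linear_add[OF lf] linear_scale[OF lf] linear_add[OF lg] linear_scale[OF lg] algebra_simps)

lemma bl_add:
  assumes "bilinear A" "bilinear B"
  shows "bilinear (\<lambda>h k. (A h k::real) + B h k)"
  using assms unfolding bilinear_def linear_iff by (simp add: algebra_simps)

lemma bl_scale:
  assumes "bilinear A"
  shows "bilinear (\<lambda>h k. c * (A h k::real))"
  using assms unfolding bilinear_def linear_iff by (simp add: algebra_simps)

lemma bl_sum:
  assumes "\<And>i. bilinear (A i)"
  shows "bilinear (\<lambda>h k. (\<Sum>i\<in>I. (A i h k::real)))"
  using assms unfolding bilinear_def linear_iff by (simp add: sum.distrib sum_distrib_left)

lemma bl_lin_l: "bilinear H \<Longrightarrow> linear (\<lambda>h. H h y)" by (simp add: bilinear_def)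
lemma bl_lin_r: "bilinear H \<Longrightarrow> linear (\<lambda>h. H y h)" by (simp add: bilinear_def)
lemma lin_inner: "linear (\<lambda>h. (p::'a::real_inner) \<bullet> h)"
  using bounded_linear_inner_right bounded_linear.linear by blast

lemma alg_core:
  fixes u \<epsilon> :: real and p :: "'a::euclidean_space" and H J :: "'a \<Rightarrow> 'a \<Rightarrow> real"
  assumes bH: "bilinear H" and bJ: "bilinear J" and sH: "\<And>x y. H x y = H y x" and u: "u < 0"
  defines "v \<equiv> sqrt (1 + (norm p)\<^sup>2)"
  defines "B \<equiv> (\<lambda>h k. (u\<^sup>2 / v) * (\<Sum>c\<in>Basis. H h c * H k c) + (u\<^sup>2 / v) * J h k + (- u\<^sup>2 / v^3) * (H h p * H k p)
     + (2 * u / v) * ((p \<bullet> h) * H k p) + (2 * u / v) * ((p \<bullet> k) * H h p) + (2 * v) * ((p \<bullet> h) * (p \<bullet> k)) + (2 * u * v) * H h k)"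
  assumes crit: "\<And>h. u\<^sup>2 * H h p / v + 2 * v * u * (p \<bullet> h) = 0"
    and hess: "\<And>h. B h h \<le> 0"
    and wt: "\<epsilon> \<le> u\<^sup>2 * ((\<Sum>b\<in>Basis. J b b) - (2 * (\<Sum>b\<in>Basis. (H p b)\<^sup>2) + J p p) / v\<^sup>2 + 2 * (H p p)\<^sup>2 / v^4) / v
                 + 2 * u * v * ((\<Sum>b\<in>Basis. H b b) - H p p / v\<^sup>2)"
    and e: "\<epsilon> > 0"
  shows False
proof -
  define P where "P = (norm p)\<^sup>2"
  define \<mu> where "\<mu> = - 2 * v\<^sup>2 / u"
  have v1: "v \<ge> 1" unfolding v_def by simp
  have vp: "v > 0" using v1 by simp
  have vsq: "v\<^sup>2 = 1 + P" unfolding v_def P_def by simp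
  have P0: "P \<ge> 0" unfolding P_def by simp
  have Pb: "(\<Sum>b\<in>Basis. (p \<bullet> b)\<^sup>2) = P" unfolding P_def by (simp add: norm_sq_basis)
  have Hp: "H h p = \<mu> * (p \<bullet> h)" for h
  proof -
    have "u\<^sup>2 * H h p / v = - 2 * v * u * (p \<bullet> h)" using crit[of h] by linarith
    then have "u\<^sup>2 * H h p = - 2 * v\<^sup>2 * u * (p \<bullet> h)" using vp by (simp add: field_simps power2_eq_square)
    then have "u * (u * H h p) = u * (- 2 * v\<^sup>2 * (p \<bullet> h))" by (simp add: power2_eq_square algebra_simps)
    moreover have "u \<noteq> 0" using u by simp
    ultimately have "u * H h p = - 2 * v\<^sup>2 * (p \<bullet> h)" using mult_left_cancel by blast
    then show ?thesis unfolding \<mu>_def using u by (simp add: field_simps)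
  qed
  have Hp': "H p h = \<mu> * (p \<bullet> h)" for h using sH[of p h] Hp[of h] by simp
  have bB: "bilinear B"
    unfolding B_def
    by (intro bl_add bl_scale bl_sum bl_prod bl_prod' bl_lin_l[OF bH] bl_lin_r[OF bH] bl_lin_l[OF bJ] lin_inner bJ bH)
  define q where "q = (\<lambda>b. b - ((b \<bullet> p) / (v * (v + 1))) *\<^sub>R p)"
  have trB: "(\<Sum>b\<in>Basis. B b b) - B p p / v\<^sup>2 \<le> 0"
  proof -
    have "(\<Sum>b\<in>Basis. B (q b) (q b)) = (\<Sum>b\<in>Basis. B b b) - B p p / v\<^sup>2"
      unfolding q_def v_def by (rule qtrick[OF bB])
    moreover have "(\<Sum>b\<in>Basis. B (q b) (q b)) \<le> 0" by (rule sum_nonpos) (use hess in auto)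
    ultimately show ?thesis by simp
  qed
  define S where "S = (\<Sum>b\<in>Basis. \<Sum>c\<in>Basis. H b c * H b c)"
  define K where "K = - u\<^sup>2 * \<mu>\<^sup>2 / v^3 + 4 * u * \<mu> / v + 2 * v"
  have Bbb: "B b b = u\<^sup>2 / v * (\<Sum>c\<in>Basis. H b c * H b c) + u\<^sup>2 / v * J b b + K * (p \<bullet> b)\<^sup>2 + 2 * u * v * H b b" for b
    unfolding B_def K_def Hp by (simp add: power2_eq_square algebra_simps)
  have sumB: "(\<Sum>b\<in>Basis. B b b) = u\<^sup>2 / v * S + u\<^sup>2 / v * (\<Sum>b\<in>Basis. J b b) + K * P + 2 * u * v * (\<Sum>b\<in>Basis. H b b)"
    unfolding Bbb S_def Pb[symmetric] by (simp add: sum.distrib sum_distrib_left)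
  have Hpp: "H p p = \<mu> * P" unfolding Hp P_def by (simp add: power2_norm_eq_inner)
  have sHp: "(\<Sum>c\<in>Basis. H p c * H p c) = \<mu>\<^sup>2 * P"
    unfolding Hp' Pb[symmetric] by (simp add: sum_distrib_left power2_eq_square algebra_simps)
  have sHp2: "(\<Sum>b\<in>Basis. (H p b)\<^sup>2) = \<mu>\<^sup>2 * P" using sHp by (simp add: power2_eq_square)
  have Bpp: "B p p = u\<^sup>2 / v * (\<mu>\<^sup>2 * P) + u\<^sup>2 / v * J p p + K * P\<^sup>2 + 2 * u * v * (\<mu> * P)"
  proof -
    have pp: "p \<bullet> p = P" unfolding P_def by (simp add: power2_norm_eq_inner)
    show ?thesis unfolding B_def K_def unfolding sHp unfolding Hpp pp Hp' by (simp add: power2_eq_square algebra_simps)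
  qed
  have CS: "\<mu>\<^sup>2 * P \<le> P * S"
  proof -
    have "(\<Sum>c\<in>Basis. (H p c)\<^sup>2) \<le> (\<Sum>c\<in>Basis. P * (\<Sum>b\<in>Basis. (H b c)\<^sup>2))"
    proof (rule sum_mono)
      fix c :: 'a
      have eq: "H p c = (\<Sum>b\<in>Basis. (p \<bullet> b) * H b c)" by (rule bil_sum_l[OF bH, symmetric])
      have "(H p c)\<^sup>2 \<le> (\<Sum>b\<in>Basis. (p \<bullet> b)\<^sup>2) * (\<Sum>b\<in>Basis. (H b c)\<^sup>2)"
        unfolding eq by (rule Cauchy_Schwarz_ineq_sum)
      then show "(H p c)\<^sup>2 \<le> P * (\<Sum>b\<in>Basis. (H b c)\<^sup>2)" using Pb by simp
    qed
    also have "\<dots> = P * S"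
    proof -
      have sq: "(H b c)\<^sup>2 = H c b * H c b" for b c using sH[of b c] by (simp add: power2_eq_square)
      show ?thesis unfolding S_def sq by (simp add: sum_distrib_left)
    qed
    finally show ?thesis using sHp2 by simp
  qed
  have S0: "S \<ge> 0" unfolding S_def by (intro sum_nonneg) auto
  have trB': "(u\<^sup>2 / v * S + u\<^sup>2 / v * (\<Sum>b\<in>Basis. J b b) + (- u\<^sup>2 * \<mu>\<^sup>2 / v^3 + 4 * u * \<mu> / v + 2 * v) * P + 2 * u * v * (\<Sum>b\<in>Basis. H b b))
       - (u\<^sup>2 / v * (\<mu>\<^sup>2 * P) + u\<^sup>2 / v * J p p + (- u\<^sup>2 * \<mu>\<^sup>2 / v^3 + 4 * u * \<mu> / v + 2 * v) * P\<^sup>2 + 2 * u * v * (\<mu> * P)) / v\<^sup>2 \<le> 0"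
    using trB unfolding sumB Bpp K_def .
  have wt': "\<epsilon> \<le> u\<^sup>2 * ((\<Sum>b\<in>Basis. J b b) - (2 * (\<mu>\<^sup>2 * P) + J p p) / v\<^sup>2 + 2 * (\<mu> * P)\<^sup>2 / v^4) / v
               + 2 * u * v * ((\<Sum>b\<in>Basis. H b b) - \<mu> * P / v\<^sup>2)"
    using wt unfolding sHp2 Hpp .
  show False by (rule scal[OF u vp vsq P0 \<mu>_def CS S0 trB' wt' e])
qed

locale SA =
  fixes \<Omega> :: "('a::euclidean_space \<times> real) set" and u :: "'a \<Rightarrow> real \<Rightarrow> real"
  assumes sa: "standing_assumption \<Omega> u"
begin

definition U where "U = (\<lambda>p. u (fst p) (snd p))"
definition D where "D hs = pderivs U \<Omega> hs"
definition PP where "PP = {q\<in>\<Omega>. snd q > 0}"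

lemma sa_unf:
  "\<Omega> \<subseteq> {p. snd p \<ge> 0} \<and> openin (top_of_set {p. snd p \<ge> 0}) \<Omega>
   \<and> (\<forall>hs. \<forall>p\<in>\<Omega>. D hs differentiable (at p within \<Omega>))
   \<and> (\<forall>p\<in>\<Omega>. snd p > 0 \<longrightarrow> gmcf_at U \<Omega> p)
   \<and> (\<forall>p0 \<in> closure \<Omega> - \<Omega>. (U \<longlongrightarrow> 0) (at p0 within \<Omega>))
   \<and> (\<forall>T>0. bounded {p\<in>\<Omega>. snd p \<le> T} \<and> (\<forall>hs. \<exists>M. \<forall>p\<in>\<Omega>. snd p \<le> T \<longrightarrow> \<bar>D hs p\<bar> \<le> M))"
  using sa unfolding standing_assumption_def Let_def D_def U_def by auto

lemma sub: "q \<in> \<Omega> \<Longrightarrow> snd q \<ge> 0" using sa_unf by auto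

lemma openPP: "open PP"
proof -
  obtain T where T: "open T" "\<Omega> = {p. snd p \<ge> 0} \<inter> T"
    using sa_unf openin_open by metis
  have "PP = T \<inter> {q. 0 < snd q}" unfolding PP_def using T by auto
  moreover have "open {q :: 'a \<times> real. 0 < snd q}"
    by (intro open_Collect_less continuous_intros)
  ultimately show ?thesis using T by auto
qed

lemma PP_sub: "PP \<subseteq> \<Omega>" unfolding PP_def by auto

lemma atPP: "q \<in> PP \<Longrightarrow> at q within \<Omega> = at q"
  using at_within_open_subset openPP PP_sub by blast

lemma D_Cons: "D (h # hs) q = frechet_derivative (D hs) (at q within \<Omega>) h"
  unfolding D_def by simp

lemma D_nil: "D [] = U" unfolding D_def by simp

lemma DER: "q \<in> PP \<Longrightarrow> (D hs has_derivative (\<lambda>h. D (h # hs) q)) (at q)"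
proof -
  assume q: "q \<in> PP"
  then have "q \<in> \<Omega>" using PP_sub by auto
  then have "D hs differentiable (at q within \<Omega>)" using sa_unf by auto
  then have "(D hs has_derivative frechet_derivative (D hs) (at q within \<Omega>)) (at q within \<Omega>)"
    using frechet_derivative_works by blast
  then show ?thesis unfolding D_Cons atPP[OF q] by (simp add: atPP[OF q] eta_contract_eq)
qed

lemma linD: "q \<in> PP \<Longrightarrow> linear (\<lambda>h. D (h # hs) q)"
  using DER has_derivative_linear by blast

lemma contD: "q \<in> \<Omega> \<Longrightarrow> continuous (at q within \<Omega>) (D hs)"
  using sa_unf differentiable_imp_continuous_within by blast

lemma swap:
  assumes q: "q \<in> PP"
  shows "D (h # k # hs) q = D (k # h # hs) q"
proof -
  have "(\<lambda>z. D (z # k # hs) q) h = (\<lambda>z. D (z # h # hs) q) k"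
    by (rule schwarz[where S=PP and f="D hs" and f'="\<lambda>y z. D (z # hs) y" and x=q])
      (auto simp: openPP q DER)
  then show ?thesis by simp
qed

lemma swap2:
  assumes q: "q \<in> PP"
  shows "D (h # k # l # hs) q = D (h # l # k # hs) q"
proof -
  have a: "(D (k # l # hs) has_derivative (\<lambda>z. D (z # k # l # hs) q)) (at q)" using DER[OF q] .
  have "(D (l # k # hs) has_derivative (\<lambda>z. D (z # k # l # hs) q)) (at q)"
    by (rule has_derivative_transform_within_open[OF a openPP q]) (use swap in auto)
  moreover have "(D (l # k # hs) has_derivative (\<lambda>z. D (z # l # k # hs) q)) (at q)" using DER[OF q] .
  ultimately have "(\<lambda>z. D (z # k # l # hs) q) = (\<lambda>z. D (z # l # k # hs) q)"
    using has_derivative_unique by blast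
  then show ?thesis by metis
qed

end

context SA begin

lemma sa1: "\<Omega> \<subseteq> {p. snd p \<ge> 0}" using sa_unf by (rule conjunct1)
lemma sa4: "\<forall>p\<in>\<Omega>. snd p > 0 \<longrightarrow> gmcf_at U \<Omega> p"
  using sa_unf[THEN conjunct2, THEN conjunct2, THEN conjunct2, THEN conjunct1] .
lemma sa5: "p0 \<in> closure \<Omega> - \<Omega> \<Longrightarrow> (U \<longlongrightarrow> 0) (at p0 within \<Omega>)"
  using sa_unf[THEN conjunct2, THEN conjunct2, THEN conjunct2, THEN conjunct2, THEN conjunct1] by blast
lemma sa6: "T > 0 \<Longrightarrow> bounded {p\<in>\<Omega>. snd p \<le> T}"
  using sa_unf[THEN conjunct2, THEN conjunct2, THEN conjunct2, THEN conjunct2, THEN conjunct2] by blast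
lemma sa7: "T > 0 \<Longrightarrow> \<exists>M. \<forall>p\<in>\<Omega>. snd p \<le> T \<longrightarrow> \<bar>D hs p\<bar> \<le> M"
  using sa_unf[THEN conjunct2, THEN conjunct2, THEN conjunct2, THEN conjunct2, THEN conjunct2] by blast

definition V where "V q = sqrt (1 + (\<Sum>b\<in>Basis. (D [(b, 0)] q)\<^sup>2))"
definition W where "W q = V q * (U q)\<^sup>2"

lemma inner_sum_basis: "b \<in> Basis \<Longrightarrow> (\<Sum>c\<in>Basis. f c *\<^sub>R c) \<bullet> b = (f b :: real)"
  by (simp add: inner_sum_left inner_Basis if_distrib cong: if_cong) 

lemma vfac_eq: "vfac U \<Omega> q = V q"
proof -
  have "(norm (gradx U \<Omega> q))\<^sup>2 = (\<Sum>b\<in>Basis. (D [(b, 0)] q)\<^sup>2)"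
    unfolding norm_sq_basis gradx_def D_def by (simp add: inner_sum_basis)
  then show ?thesis unfolding vfac_def V_def by simp
qed

lemma V_ge1: "V q \<ge> 1" unfolding V_def by (simp add: sum_nonneg)

lemma contW: "q \<in> \<Omega> \<Longrightarrow> continuous (at q within \<Omega>) W"
  unfolding W_def V_def D_nil[symmetric] by (intro continuous_intros contD)

lemma contU: "q \<in> \<Omega> \<Longrightarrow> continuous (at q within \<Omega>) U"
  using contD[of q "[]"] by (simp add: D_nil)

lemma Vbound:
  assumes T: "T > 0"
  shows "\<exists>C. \<forall>q\<in>\<Omega>. snd q \<le> T \<longrightarrow> V q \<le> C"
proof -
  have "\<forall>b. \<exists>M. \<forall>q\<in>\<Omega>. snd q \<le> T \<longrightarrow> \<bar>D [(b, 0)] q\<bar> \<le> M" using sa7[OF T] by blast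
  then obtain M where M: "\<And>b q. q \<in> \<Omega> \<Longrightarrow> snd q \<le> T \<Longrightarrow> \<bar>D [(b, 0)] q\<bar> \<le> M b" by metis
  show ?thesis
  proof (intro exI ballI impI)
    fix q assume q: "q \<in> \<Omega>" "snd q \<le> T"
    have "(\<Sum>b\<in>Basis. (D [(b, 0)] q)\<^sup>2) \<le> (\<Sum>b\<in>Basis. (M b)\<^sup>2)"
    proof (rule sum_mono)
      fix b :: 'a
      have "\<bar>D [(b, 0)] q\<bar>\<^sup>2 \<le> (M b)\<^sup>2" using M[OF q] by (intro power_mono) auto
      then show "(D [(b, 0)] q)\<^sup>2 \<le> (M b)\<^sup>2" by simp
    qed
    then show "V q \<le> sqrt (1 + (\<Sum>b\<in>Basis. (M b)\<^sup>2))" unfolding V_def by simp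
  qed
qed

lemma closure_sub: "x \<in> closure \<Omega> \<Longrightarrow> snd x \<ge> 0"
proof -
  assume x: "x \<in> closure \<Omega>"
  have "closed {p :: 'a \<times> real. 0 \<le> snd p}" by (intro closed_Collect_le continuous_intros)
  moreover have "\<Omega> \<subseteq> {p. 0 \<le> snd p}" using sa1 by simp
  ultimately have "closure \<Omega> \<subseteq> {p. 0 \<le> snd p}" by (rule closure_minimal[rotated])
  then show ?thesis using x by auto
qed

lemma W_bdry:
  assumes p0: "p0 \<in> closure \<Omega> - \<Omega>"
  shows "(W \<longlongrightarrow> 0) (at p0 within \<Omega>)"
proof -
  define T where "T = snd p0 + 1"
  have "snd p0 \<ge> 0" using closure_sub p0 by blast
  then have T: "T > 0" unfolding T_def by simp
  obtain C where C: "\<And>q. q \<in> \<Omega> \<Longrightarrow> snd q \<le> T \<Longrightarrow> V q \<le> C" using Vbound[OF T] by blast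
  have U0: "(U \<longlongrightarrow> 0) (at p0 within \<Omega>)" using sa5[OF p0] .
  have ev1: "eventually (\<lambda>q. snd q < T) (at p0 within \<Omega>)"
  proof -
    have "(snd \<longlongrightarrow> snd p0) (at p0 within \<Omega>)" by (intro tendsto_intros)
    moreover have "snd p0 < T" unfolding T_def by simp
    ultimately show ?thesis using order_tendstoD(2) by blast
  qed
  have ev2: "eventually (\<lambda>q. q \<in> \<Omega>) (at p0 within \<Omega>)" by (simp add: eventually_at_filter)
  have ev: "eventually (\<lambda>q. norm (W q) \<le> C * (U q)\<^sup>2) (at p0 within \<Omega>)"
    using ev1 ev2
  proof eventually_elim
    case (elim q)
    then have "V q \<le> C" using C by auto
    moreover have "V q \<ge> 0" using V_ge1[of q] by simp
    moreover have "norm (W q) = V q * (U q)\<^sup>2" using \<open>V q \<ge> 0\<close> by (simp add: W_def abs_mult)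
    ultimately show ?case by (simp add: mult_right_mono)
  qed
  have "((\<lambda>q. C * (U q)\<^sup>2) \<longlongrightarrow> C * 0\<^sup>2) (at p0 within \<Omega>)"
    by (intro tendsto_intros U0)
  then have lim: "((\<lambda>q. C * (U q)\<^sup>2) \<longlongrightarrow> 0) (at p0 within \<Omega>)" by simp
  show ?thesis by (rule Lim_null_comparison[OF ev lim])
qed

lemma compactK:
  assumes T: "T \<ge> 0" and e: "\<epsilon> \<ge> 0" and d: "\<delta> > 0"
  shows "compact {q\<in>\<Omega>. snd q \<le> T \<and> U q \<le> 0 \<and> \<delta> \<le> W q - \<epsilon> * snd q}" (is "compact ?K")
proof (subst compact_eq_bounded_closed, intro conjI)
  have T1: "T + 1 > 0" using T by simp
  have "bounded {p\<in>\<Omega>. snd p \<le> T + 1}" using sa6[OF T1] .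
  then show "bounded ?K" by (rule bounded_subset) auto
  show "closed ?K"
    unfolding closed_limpt
  proof (intro allI impI)
    fix x assume x: "x islimpt ?K"
    let ?F = "at x within ?K"
    have F: "\<not> trivial_limit ?F" using x trivial_limit_within by blast
    have evK: "eventually (\<lambda>q. q \<in> ?K) ?F" by (simp add: eventually_at_filter)
    have xcl: "x \<in> closure \<Omega>"
      using islimpt_subset[OF x, of \<Omega>] unfolding closure_def by auto
    show "x \<in> ?K"
    proof (cases "x \<in> \<Omega>")
      case False
      then have "(W \<longlongrightarrow> 0) (at x within \<Omega>)" using W_bdry xcl by blast
      then have "(W \<longlongrightarrow> 0) ?F" by (rule tendsto_within_subset) auto
      moreover have "eventually (\<lambda>q. \<delta> \<le> W q) ?F"
        using evK
      proof eventually_elim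
        case (elim q)
        then have "0 \<le> \<epsilon> * snd q" using e sub by auto
        then show ?case using elim by auto
      qed
      ultimately have "\<delta> \<le> 0" using F tendsto_lowerbound by blast
      then show ?thesis using d by simp
    next
      case True
      have "(W \<longlongrightarrow> W x) (at x within \<Omega>)" using contW[OF True] unfolding continuous_within .
      then have cW: "(W \<longlongrightarrow> W x) ?F" by (rule tendsto_within_subset) auto
      have "(U \<longlongrightarrow> U x) (at x within \<Omega>)" using contU[OF True] unfolding continuous_within .
      then have cU: "(U \<longlongrightarrow> U x) ?F" by (rule tendsto_within_subset) auto
      have cs: "(snd \<longlongrightarrow> snd x) ?F" by (intro tendsto_intros)
      have "snd x \<le> T"
        by (rule tendsto_upperbound[OF cs _ F]) (rule eventually_mono[OF evK], auto)
      moreover have "U x \<le> 0"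
        by (rule tendsto_upperbound[OF cU _ F]) (rule eventually_mono[OF evK], auto)
      moreover have "\<delta> \<le> W x - \<epsilon> * snd x"
      proof (rule tendsto_lowerbound[OF _ _ F])
        show "((\<lambda>q. W q - \<epsilon> * snd q) \<longlongrightarrow> W x - \<epsilon> * snd x) ?F" by (intro tendsto_intros cW cs)
        show "eventually (\<lambda>q. \<delta> \<le> W q - \<epsilon> * snd q) ?F" by (rule eventually_mono[OF evK]) auto
      qed
      ultimately show ?thesis using True by simp
    qed
  qed
qed

end

context SA begin

definition G where "G q = (\<Sum>b\<in>Basis. (D [(b, 0)] q)\<^sup>2)"

lemma V_G: "V q = sqrt (1 + G q)" unfolding V_def G_def ..

lemma G_nonneg: "G q \<ge> 0" unfolding G_def by (simp add: sum_nonneg)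

lemma V_pos: "V q > 0" using V_ge1[of q] by simp

lemma V_sq: "(V q)\<^sup>2 = 1 + G q" unfolding V_G using G_nonneg[of q] by simp

lemma dG:
  assumes q: "q \<in> PP"
  shows "(G has_derivative (\<lambda>z. \<Sum>b\<in>Basis. 2 * D [(b, 0)] q * D [z, (b, 0)] q)) (at q)"
  unfolding G_def
  by (rule has_derivative_eq_rhs, (rule derivative_intros DER[OF q])+) (simp add: fun_eq_iff algebra_simps)

lemma dV:
  assumes q: "q \<in> PP"
  shows "(V has_derivative (\<lambda>z. (\<Sum>b\<in>Basis. D [(b, 0)] q * D [z, (b, 0)] q) / V q)) (at q)"
proof -
  have pos: "0 < 1 + G q" using G_nonneg[of q] by simp
  have sq: "sqrt (1 + G q) > 0" using pos by simp
  show ?thesis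
    unfolding V_G[abs_def]
    apply (rule has_derivative_eq_rhs)
     apply (rule has_derivative_real_sqrt[where g="\<lambda>y. 1 + G y"])
      apply (simp add: pos)
     apply (rule derivative_intros dG[OF q])+
    using sq by (simp add: fun_eq_iff sum_distrib_left[symmetric] field_simps)
qed

lemma dU:
  assumes q: "q \<in> PP"
  shows "(U has_derivative (\<lambda>z. D [z] q)) (at q)"
  using DER[OF q, of "[]"] by (simp add: D_nil)

definition dWf where
  "dWf q z = (\<Sum>b\<in>Basis. D [(b, 0)] q * D [z, (b, 0)] q) / V q * (U q)\<^sup>2 + V q * (2 * U q * D [z] q)"

lemma dW:
  assumes q: "q \<in> PP"
  shows "(W has_derivative dWf q) (at q)"
  unfolding W_def[abs_def] dWf_def[abs_def]
  by (rule has_derivative_eq_rhs, (rule derivative_intros dV[OF q] dU[OF q])+) (simp add: fun_eq_iff algebra_simps)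


definition dVf where "dVf q z = (\<Sum>b\<in>Basis. D [(b, 0)] q * D [z, (b, 0)] q) / V q"

definition N where "N q = (\<Sum>b\<in>Basis. \<Sum>c\<in>Basis. D [(b, 0)] q * D [(c, 0)] q * D [(b, 0), (c, 0)] q)"

definition F where "F q = (\<Sum>b\<in>Basis. D [(b, 0), (b, 0)] q) - N q / (1 + G q)"

lemma dV': "q \<in> PP \<Longrightarrow> (V has_derivative dVf q) (at q)"
  using dV unfolding dVf_def[abs_def] by simp

lemma div_eq: "(v::real) \<noteq> 0 \<Longrightarrow> - a * (inverse v * d * inverse v) + c / v = (c * v - a * d) / v\<^sup>2"
  by (simp add: field_simps power2_eq_square)

lemma pde:
  assumes q: "q \<in> PP"
  shows "D [(0, 1)] q = F q"
proof -
  have qO: "q \<in> \<Omega>" "snd q > 0" using q unfolding PP_def by auto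
  have g: "gmcf_at U \<Omega> q" using sa4 qO by simp
  have vf: "vfac U \<Omega> = V" using vfac_eq by (simp add: fun_eq_iff)
  have Vn: "V q \<noteq> 0" using V_pos[of q] by simp
  have fd: "frechet_derivative (\<lambda>y. D [(b, 0)] y / V y) (at q) (b, 0)
     = (D [(b, 0), (b, 0)] q * V q - D [(b, 0)] q * dVf q (b, 0)) / (V q)\<^sup>2" for b
  proof -
    have "((\<lambda>y. D [(b, 0)] y / V y) has_derivative
        (\<lambda>z. (D [z, (b, 0)] q * V q - D [(b, 0)] q * dVf q z) / (V q)\<^sup>2)) (at q)"
      apply (rule has_derivative_eq_rhs)
       apply (rule has_derivative_divide[OF DER[OF q] dV'[OF q] Vn])
      by (rule ext, rule div_eq[OF Vn])
    then have "(\<lambda>z. (D [z, (b, 0)] q * V q - D [(b, 0)] q * dVf q z) / (V q)\<^sup>2) = frechet_derivative (\<lambda>y. D [(b, 0)] y / V y) (at q)"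
      by (rule frechet_derivative_at)
    from fun_cong[OF this, of "(b, 0)"] show ?thesis by simp
  qed
  have "D [(0, 1)] q = V q * (\<Sum>b\<in>Basis. frechet_derivative (\<lambda>y. D [(b, 0)] y / V y) (at q) (b, 0))"
    using g unfolding gmcf_at_def D_def[symmetric] vf atPP[OF q] .
  also have "\<dots> = (\<Sum>b\<in>Basis. D [(b, 0), (b, 0)] q - D [(b, 0)] q * dVf q (b, 0) / V q)"
    unfolding fd sum_distrib_left using Vn by (intro sum.cong refl) (simp add: field_simps power2_eq_square)
  also have "\<dots> = (\<Sum>b\<in>Basis. D [(b, 0), (b, 0)] q) - (\<Sum>b\<in>Basis. D [(b, 0)] q * dVf q (b, 0)) / V q"
    by (simp add: sum_subtractf sum_divide_distrib)
  also have "(\<Sum>b\<in>Basis. D [(b, 0)] q * dVf q (b, 0)) / V q = N q / (1 + G q)"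
  proof -
    have "(\<Sum>b\<in>Basis. D [(b, 0)] q * dVf q (b, 0)) = N q / V q"
      unfolding dVf_def N_def by (simp add: sum_distrib_left sum_divide_distrib mult.assoc mult.left_commute)
    then show ?thesis using V_sq[of q] by (simp add: power2_eq_square)
  qed
  finally show ?thesis unfolding F_def .
qed


definition dGf where "dGf q z = (\<Sum>b\<in>Basis. 2 * D [(b, 0)] q * D [z, (b, 0)] q)"

definition dNf where "dNf q z = (\<Sum>b\<in>Basis. \<Sum>c\<in>Basis.
   D [(b, 0)] q * D [(c, 0)] q * D [z, (b, 0), (c, 0)] q
   + (D [(b, 0)] q * D [z, (c, 0)] q + D [z, (b, 0)] q * D [(c, 0)] q) * D [(b, 0), (c, 0)] q)"

lemma dN: "q \<in> PP \<Longrightarrow> (N has_derivative dNf q) (at q)"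
  unfolding N_def[abs_def] dNf_def[abs_def]
  by (intro has_derivative_sum has_derivative_mult DER)

definition dFf where "dFf q z = (\<Sum>b\<in>Basis. D [z, (b, 0), (b, 0)] q)
   - (- N q * (inverse (1 + G q) * (0 + dGf q z) * inverse (1 + G q)) + dNf q z / (1 + G q))"

lemma dF:
  assumes q: "q \<in> PP"
  shows "(F has_derivative dFf q) (at q)"
proof -
  have nz: "1 + G q \<noteq> 0" using G_nonneg[of q] by simp
  have g: "(G has_derivative dGf q) (at q)" using dG[OF q] unfolding dGf_def[abs_def] .
  show ?thesis unfolding F_def[abs_def] dFf_def[abs_def]
    by (intro has_derivative_diff has_derivative_sum DER[OF q] has_derivative_divide dN[OF q]
        has_derivative_add has_derivative_const g nz)
qed

lemma Dt:
  assumes q: "q \<in> PP"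
  shows "D [z, (0, 1)] q = dFf q z"
proof -
  have a: "(D [(0, 1)] has_derivative (\<lambda>z. D [z, (0, 1)] q)) (at q)" using DER[OF q] .
  have "(F has_derivative (\<lambda>z. D [z, (0, 1)] q)) (at q)"
    by (rule has_derivative_transform_within_open[OF a openPP q]) (use pde in auto)
  with dF[OF q] have "(\<lambda>z. D [z, (0, 1)] q) = dFf q" using has_derivative_unique by blast
  then show ?thesis by metis
qed

definition Af where "Af q z = (\<Sum>b\<in>Basis. D [(b, 0)] q * D [z, (b, 0)] q)"

lemma dWf_A: "dWf q z = Af q z / V q * (U q)\<^sup>2 + V q * (2 * U q * D [z] q)"
  unfolding dWf_def Af_def ..

lemma dVf_A: "dVf q z = Af q z / V q" unfolding dVf_def Af_def ..

lemma dA: "q \<in> PP \<Longrightarrow> ((\<lambda>y. Af y z) has_derivative (\<lambda>z'. \<Sum>b\<in>Basis. D [(b, 0)] q * D [z', z, (b, 0)] q + D [z', (b, 0)] q * D [z, (b, 0)] q)) (at q)"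
  unfolding Af_def by (intro has_derivative_sum has_derivative_mult DER)

definition dAf where "dAf q z z' = (\<Sum>b\<in>Basis. D [(b, 0)] q * D [z', z, (b, 0)] q + D [z', (b, 0)] q * D [z, (b, 0)] q)"

definition d2f where "d2f q z z' = (dAf q z z' * V q - Af q z * dVf q z') / (V q)\<^sup>2 * (U q)\<^sup>2
   + Af q z / V q * (2 * U q * D [z'] q) + dVf q z' * (2 * U q * D [z] q)
   + V q * (2 * (D [z'] q * D [z] q + U q * D [z', z] q))"

lemma d2_alg: "(v::real) \<noteq> 0 \<Longrightarrow> a / v * (real 2 * dy * uu ^ (2 - 1)) + (- a * (inverse v * dv * inverse v) + da / v) * uu\<^sup>2
  + (v * (2 * uu * dyz + (2 * dy + 0 * uu) * dz) + dv * (2 * uu * dz))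
  = (da * v - a * dv) / v\<^sup>2 * uu\<^sup>2 + a / v * (2 * uu * dy) + dv * (2 * uu * dz) + v * (2 * (dy * dz + uu * dyz))"
  by (simp add: field_simps power2_eq_square)

lemma d2W:
  assumes q: "q \<in> PP"
  shows "((\<lambda>y. dWf y z) has_derivative d2f q z) (at q)"
proof -
  have Vn: "V q \<noteq> 0" using V_pos[of q] by simp
  have a: "((\<lambda>y. Af y z) has_derivative dAf q z) (at q)" using dA[OF q] unfolding dAf_def[abs_def] .
  note av = has_derivative_divide[OF a dV'[OF q] Vn]
  note u2 = has_derivative_power[OF dU[OF q], of 2]
  note t1 = has_derivative_mult[OF av u2]
  note uc = has_derivative_mult[OF has_derivative_mult[OF has_derivative_const[of 2] dU[OF q]] DER[OF q, of "[z]"]]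
  note t2 = has_derivative_mult[OF dV'[OF q] uc]
  from has_derivative_add[OF t1 t2] show ?thesis
    unfolding dWf_A[abs_def]
    apply (rule has_derivative_eq_rhs)
    apply (rule ext)
    apply (unfold d2f_def)
    by (rule d2_alg[OF Vn])
qed

end

lemma second_le:
  fixes \<phi> \<phi>' :: "real \<Rightarrow> real"
  assumes d: "d > 0" and le: "\<And>s. \<bar>s\<bar> < d \<Longrightarrow> \<phi> s \<le> \<phi> 0"
    and der: "\<And>s. \<bar>s\<bar> < d \<Longrightarrow> (\<phi> has_real_derivative \<phi>' s) (at s)"
    and z: "\<phi>' 0 = 0" and L: "(\<phi>' has_real_derivative L) (at 0)"
  shows "L \<le> 0"
proof (rule ccontr)
  assume "\<not> L \<le> 0"
  then have "L > 0" by simp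
  from DERIV_pos_inc_right[OF L this] obtain d' where d': "d' > 0"
    and inc: "\<And>h. h > 0 \<Longrightarrow> h < d' \<Longrightarrow> \<phi>' 0 < \<phi>' (0 + h)" by blast
  define s where "s = min d d' / 2"
  have s: "0 < s" "s < d" "s < d'" using d d' unfolding s_def by auto
  have "\<exists>z. 0 < z \<and> z < s \<and> \<phi> s - \<phi> 0 = (s - 0) * \<phi>' z"
    by (rule MVT2) (use s der in auto)
  then obtain z where z1: "0 < z" "z < s" and eq: "\<phi> s - \<phi> 0 = s * \<phi>' z" by auto
  have "\<phi>' z > 0" using inc[of z] z1 s z by simp
  then have "\<phi> s > \<phi> 0" using eq s by (smt (verit) mult_pos_pos)
  moreover have "\<phi> s \<le> \<phi> 0" using le s by simp
  ultimately show False by simp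
qed

lemma lin_sum_basis:
  fixes f :: "'a::euclidean_space \<Rightarrow> real"
  assumes l: "linear f"
  shows "(\<Sum>b\<in>Basis. (p \<bullet> b) * f b) = f p"
proof -
  have "f p = f (\<Sum>b\<in>Basis. (p \<bullet> b) *\<^sub>R b)" by (simp add: euclidean_representation)
  also have "\<dots> = (\<Sum>b\<in>Basis. f ((p \<bullet> b) *\<^sub>R b))" using linear_sum[OF l] by (simp add: o_def)
  also have "\<dots> = (\<Sum>b\<in>Basis. (p \<bullet> b) * f b)" using linear_scale[OF l] by simp
  finally show ?thesis by simp
qed

lemma lin_pair: "linear L \<Longrightarrow> linear (\<lambda>y. L (y, 0::real))"
  unfolding linear_iff
proof (intro conjI allI)
  assume l: "(\<forall>x y. L (x + y) = L x + L y) \<and> (\<forall>c x. L (c *\<^sub>R x) = c *\<^sub>R L x)"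
  fix x y :: 'a and c :: real
  have "(x + y, 0::real) = (x, 0) + (y, 0)" by simp
  then show "L (x + y, 0) = L (x, 0) + L (y, 0)" using l by metis
  have "(c *\<^sub>R x, 0::real) = c *\<^sub>R (x, 0)" by simp
  then show "L (c *\<^sub>R x, 0) = c *\<^sub>R L (x, 0)" using l by metis
qed

lemma uu_alg1: "(v::real) \<noteq> 0 \<Longrightarrow> ((s + j) * v - a * (a / v)) / v\<^sup>2 * uu\<^sup>2 + a / v * (2 * uu * x) + a / v * (2 * uu * x)
   + v * (2 * (x * x + uu * hh))
   = (uu\<^sup>2 / v) * s + (uu\<^sup>2 / v) * j + (- uu\<^sup>2 / v^3) * (a * a) + (2 * uu / v) * (x * a) + (2 * uu / v) * (x * a)
     + (2 * v) * (x * x) + (2 * uu * v) * hh"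
  by (simp add: field_simps power2_eq_square power3_eq_cube)

lemma uu_alg2: "(v::real) \<noteq> 0 \<Longrightarrow> 1 + g = v\<^sup>2 \<Longrightarrow>
   sj - (- hpp * (inverse (1 + g) * (0 + 2 * hpp) * inverse (1 + g)) + (jpp + 2 * sh) / (1 + g))
   = sj - (2 * sh + jpp) / v\<^sup>2 + 2 * hpp\<^sup>2 / v^4"
  by (simp add: field_simps power2_eq_square power4_eq_xxxx)

context SA begin

definition pv where "pv q = (\<Sum>b\<in>Basis. D [(b, 0)] q *\<^sub>R b)"

lemma pv_inner: "b \<in> Basis \<Longrightarrow> pv q \<bullet> b = D [(b, 0)] q"
  unfolding pv_def by (rule inner_sum_basis)

lemma pv_norm: "(norm (pv q))\<^sup>2 = G q"
  unfolding norm_sq_basis G_def by (simp add: pv_inner)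

lemma V_pv: "V q = sqrt (1 + (norm (pv q))\<^sup>2)" unfolding V_G pv_norm ..

lemma linD1: "q \<in> PP \<Longrightarrow> linear (\<lambda>y. D ((y, 0) # hs) q)"
  by (rule lin_pair[OF linD])

lemma D1_inner: "q \<in> PP \<Longrightarrow> D [(h, 0)] q = pv q \<bullet> h"
proof -
  assume q: "q \<in> PP"
  have "D [(h, 0)] q = (\<Sum>b\<in>Basis. (h \<bullet> b) * D [(b, 0)] q)"
    using lin_sum_basis[OF linD1[OF q, of "[]"], of h] by simp
  also have "\<dots> = pv q \<bullet> h" unfolding pv_def inner_commute[of _ h] inner_sum_right by (simp add: mult.commute)
  finally show ?thesis .
qed

lemma bilH: "q \<in> PP \<Longrightarrow> bilinear (\<lambda>y z. D [(y, 0), (z, 0)] q)"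
proof -
  assume q: "q \<in> PP"
  have l1: "linear (\<lambda>y. D [(y, 0), (z, 0)] q)" for z using linD1[OF q, of "[(z, 0)]"] by simp
  have "(\<lambda>z. D [(y, 0), (z, 0)] q) = (\<lambda>z. D [(z, 0), (y, 0)] q)" for y
    using swap[OF q, of "(y, 0)" _ "[]"] by (simp add: fun_eq_iff)
  then have l2: "linear (\<lambda>z. D [(y, 0), (z, 0)] q)" for y using l1 by simp
  show ?thesis unfolding bilinear_def using l1 l2 by simp
qed

lemma bilJ: "q \<in> PP \<Longrightarrow> bilinear (\<lambda>y z. D [(w, 0), (y, 0), (z, 0)] q)"
proof -
  assume q: "q \<in> PP"
  have e1: "D [(w, 0), (y, 0), (z, 0)] q = D [(y, 0), (w, 0), (z, 0)] q" for y z
    using swap[OF q] by simp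
  have l1: "linear (\<lambda>y. D [(w, 0), (y, 0), (z, 0)] q)" for z
    unfolding e1 using linD1[OF q, of "[(w, 0), (z, 0)]"] by simp
  have "(\<lambda>z. D [(w, 0), (y, 0), (z, 0)] q) = (\<lambda>z. D [(w, 0), (z, 0), (y, 0)] q)" for y
    using swap2[OF q, of "(w, 0)" _ _ "[]"] by (simp add: fun_eq_iff)
  then have l2: "linear (\<lambda>z. D [(w, 0), (y, 0), (z, 0)] q)" for y using l1 by simp
  show ?thesis unfolding bilinear_def using l1 l2 by simp
qed


lemma line_facts:
  assumes q: "q \<in> PP" and r: "r > 0" and bl: "ball q r \<subseteq> PP"
    and loc: "\<And>y. dist y q < r \<Longrightarrow> snd y \<le> snd q \<Longrightarrow> W y - \<epsilon> * snd y \<le> W q - \<epsilon> * snd q"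
  shows "dWf q (h, 0) = 0 \<and> d2f q (h, 0) (h, 0) \<le> 0"
proof -
  define k where "k = (h, 0::real)"
  have nk: "norm k = norm h" unfolding k_def by (simp add: norm_Pair)
  define d where "d = r / (norm h + 1)"
  have np: "norm h + 1 > 0" by (simp add: add_nonneg_pos)
  have d: "d > 0" unfolding d_def using r np by simp
  have inb: "dist (q + s *\<^sub>R k) q < r" if "\<bar>s\<bar> < d" for s
  proof -
    have "dist (q + s *\<^sub>R k) q = \<bar>s\<bar> * norm h" by (simp add: dist_norm nk)
    also have "\<dots> \<le> \<bar>s\<bar> * (norm h + 1)" by (simp add: mult_left_mono)
    also have "\<dots> < d * (norm h + 1)" using that np by (simp add: mult_strict_right_mono)
    also have "\<dots> = r" unfolding d_def using np by simp
    finally show ?thesis .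
  qed
  have inPP: "q + s *\<^sub>R k \<in> PP" if "\<bar>s\<bar> < d" for s
    using bl inb[OF that] by (auto simp: dist_commute)
  have sndk: "snd (q + s *\<^sub>R k) = snd q" for s unfolding k_def by simp
  define \<phi> where "\<phi> = (\<lambda>s. W (q + s *\<^sub>R k))"
  define \<phi>' where "\<phi>' = (\<lambda>s. dWf (q + s *\<^sub>R k) k)"
  have le: "\<phi> s \<le> \<phi> 0" if "\<bar>s\<bar> < d" for s
    using loc[OF inb[OF that]] unfolding \<phi>_def sndk by simp
  have der: "(\<phi> has_real_derivative \<phi>' s) (at s)" if "\<bar>s\<bar> < d" for s
    unfolding \<phi>_def \<phi>'_def by (rule deriv_line) (rule dW[OF inPP[OF that]])
  have z: "\<phi>' 0 = 0"
  proof -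
    have "(\<phi> has_real_derivative \<phi>' 0) (at 0)" using der d by simp
    then show ?thesis by (rule DERIV_local_max[OF _ d]) (use le in simp)
  qed
  have L: "(\<phi>' has_real_derivative d2f q k k) (at 0)"
  proof -
    have "((\<lambda>y. dWf y k) has_derivative d2f q k) (at (q + 0 *\<^sub>R k))" using d2W[OF q] by simp
    from deriv_line[OF this] show ?thesis unfolding \<phi>'_def .
  qed
  have "d2f q k k \<le> 0" by (rule second_le[OF d le der z L])
  moreover have "dWf q k = 0" using z unfolding \<phi>'_def by simp
  ultimately show ?thesis unfolding k_def by simp
qed

lemma time_fact:
  assumes q: "q \<in> PP" and r: "r > 0"
    and loc: "\<And>y. dist y q < r \<Longrightarrow> snd y \<le> snd q \<Longrightarrow> W y - \<epsilon> * snd y \<le> W q - \<epsilon> * snd q"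
  shows "\<epsilon> \<le> dWf q (0, 1)"
proof (rule ccontr)
  assume neg: "\<not> \<epsilon> \<le> dWf q (0, 1)"
  define k where "k = (0::'a, 1::real)"
  define \<psi> where "\<psi> = (\<lambda>s. W (q + s *\<^sub>R k) - \<epsilon> * snd (q + s *\<^sub>R k))"
  have a: "((\<lambda>s. W (q + s *\<^sub>R k)) has_real_derivative dWf q k) (at 0)"
    using deriv_line[of W "dWf q" q 0 k] dW[OF q] by simp
  have e: "\<psi> = (\<lambda>s. W (q + s *\<^sub>R k) - (\<epsilon> * snd q + \<epsilon> * s))"
    unfolding \<psi>_def k_def by (simp add: algebra_simps)
  have b: "((\<lambda>s. \<epsilon> * snd q + \<epsilon> * s) has_real_derivative \<epsilon>) (at 0)"
    by (auto intro!: derivative_eq_intros)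
  have "(\<psi> has_real_derivative dWf q k - \<epsilon>) (at 0)" unfolding e by (rule DERIV_diff[OF a b])
  from DERIV_neg_dec_left[OF this] neg obtain d where d: "d > 0"
    and dec: "\<And>h. h > 0 \<Longrightarrow> h < d \<Longrightarrow> \<psi> 0 < \<psi> (0 - h)" unfolding k_def by force
  define h where "h = min d r / 2"
  have h: "h > 0" "h < d" "h < r" using d r unfolding h_def by auto
  have "dist (q + (- h) *\<^sub>R k) q < r" using h unfolding k_def by (simp add: dist_norm norm_Pair)
  moreover have "snd (q + (- h) *\<^sub>R k) \<le> snd q" using h unfolding k_def by simp
  ultimately have X: "W (q + (- h) *\<^sub>R k) - \<epsilon> * snd (q + (- h) *\<^sub>R k) \<le> W q - \<epsilon> * snd q" by (rule loc)
  have "\<psi> (0 - h) \<le> \<psi> 0" using X unfolding \<psi>_def by simp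
  with dec[OF h(1,2)] show False by simp
qed


lemma maxpt_false:
  assumes q: "q \<in> PP" and Uq: "U q < 0" and r: "r > 0" and bl: "ball q r \<subseteq> PP" and eps: "\<epsilon> > 0"
    and loc: "\<And>y. dist y q < r \<Longrightarrow> snd y \<le> snd q \<Longrightarrow> W y - \<epsilon> * snd y \<le> W q - \<epsilon> * snd q"
  shows False
proof -
  define p where "p = pv q"
  define H where "H = (\<lambda>y z. D [(y, 0), (z, 0)] q)"
  define J where "J = (\<lambda>y z. D [(p, 0), (y, 0), (z, 0)] q)"
  define uu where "uu = U q"
  define v where "v = sqrt (1 + (norm p)\<^sup>2)"
  have vV: "V q = v" unfolding v_def p_def by (rule V_pv)
  have vn: "v \<noteq> 0" using V_pos[of q] vV by simp
  have vsq: "1 + G q = v\<^sup>2" using V_sq[of q] vV by simp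
  have bH: "bilinear H" unfolding H_def by (rule bilH[OF q])
  have bJ: "bilinear J" unfolding J_def by (rule bilJ[OF q])
  have sH: "H x y = H y x" for x y unfolding H_def using swap[OF q] by simp
  have pb: "D [(b, 0)] q = p \<bullet> b" if "b \<in> Basis" for b unfolding p_def using pv_inner[OF that] by simp
  have Dh: "D [(h, 0)] q = p \<bullet> h" for h unfolding p_def by (rule D1_inner[OF q])
  have Af: "Af q (h, 0) = H h p" for h
  proof -
    have "Af q (h, 0) = (\<Sum>b\<in>Basis. (p \<bullet> b) * H h b)" unfolding Af_def H_def by (simp add: pb)
    also have "\<dots> = H h p" by (rule bil_sum_r[OF bH])
    finally show ?thesis .
  qed
  have crit: "uu\<^sup>2 * H h p / v + 2 * v * uu * (p \<bullet> h) = 0" for h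
  proof -
    have "dWf q (h, 0) = 0" using line_facts[OF q r bl loc] by blast
    then show ?thesis unfolding dWf_A Af vV Dh uu_def[symmetric] by (simp add: algebra_simps)
  qed
  have hess: "(uu\<^sup>2 / v) * (\<Sum>c\<in>Basis. H h c * H h c) + (uu\<^sup>2 / v) * J h h + (- uu\<^sup>2 / v^3) * (H h p * H h p)
     + (2 * uu / v) * ((p \<bullet> h) * H h p) + (2 * uu / v) * ((p \<bullet> h) * H h p) + (2 * v) * ((p \<bullet> h) * (p \<bullet> h)) + (2 * uu * v) * H h h \<le> 0" for h
  proof -
    have T: "(\<Sum>b\<in>Basis. D [(b, 0)] q * D [(h, 0), (h, 0), (b, 0)] q) = J h h"
    proof -
      have "D [(h, 0), (h, 0), (b, 0)] q = D [(b, 0), (h, 0), (h, 0)] q" for b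
        using swap2[OF q, of "(h, 0)" "(h, 0)" "(b, 0)" "[]"] swap[OF q, of "(h, 0)" "(b, 0)" "[(h, 0)]"] by simp
      then have "(\<Sum>b\<in>Basis. D [(b, 0)] q * D [(h, 0), (h, 0), (b, 0)] q) = (\<Sum>b\<in>Basis. (p \<bullet> b) * D [(b, 0), (h, 0), (h, 0)] q)"
        by (simp add: pb)
      also have "\<dots> = J h h" unfolding J_def by (rule lin_sum_basis[OF linD1[OF q]])
      finally show ?thesis .
    qed
    have dA: "dAf q (h, 0) (h, 0) = (\<Sum>c\<in>Basis. H h c * H h c) + J h h"
      unfolding dAf_def sum.distrib T[symmetric] H_def by (simp add: add.commute)
    have "d2f q (h, 0) (h, 0) \<le> 0" using line_facts[OF q r bl loc] by blast
    then have "(((\<Sum>c\<in>Basis. H h c * H h c) + J h h) * v - H h p * (H h p / v)) / v\<^sup>2 * uu\<^sup>2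
        + H h p / v * (2 * uu * (p \<bullet> h)) + H h p / v * (2 * uu * (p \<bullet> h))
        + v * (2 * ((p \<bullet> h) * (p \<bullet> h) + uu * H h h)) \<le> 0"
      unfolding d2f_def dA dVf_A Af vV Dh uu_def[symmetric] H_def by simp
    then show ?thesis unfolding uu_alg1[OF vn] .
  qed
  have wt0: "\<epsilon> \<le> dWf q (0, 1)" by (rule time_fact[OF q r loc])
  have Npp: "N q = H p p"
  proof -
    have "N q = (\<Sum>b\<in>Basis. (p \<bullet> b) * (\<Sum>c\<in>Basis. (p \<bullet> c) * H b c))"
      unfolding N_def H_def by (simp add: pb sum_distrib_left mult.assoc)
    also have "\<dots> = (\<Sum>b\<in>Basis. (p \<bullet> b) * H b p)" using bil_sum_r[OF bH] by simp
    also have "\<dots> = H p p" by (rule bil_sum_l[OF bH])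
    finally show ?thesis .
  qed
  have tau: "D [(0, 1)] q = (\<Sum>b\<in>Basis. H b b) - H p p / v\<^sup>2"
    unfolding pde[OF q] F_def Npp vsq H_def ..
  have Aft: "Af q (0, 1) = dFf q (p, 0)"
  proof -
    have "Af q (0, 1) = (\<Sum>b\<in>Basis. (p \<bullet> b) * D [(b, 0), (0, 1)] q)"
      unfolding Af_def using swap[OF q, of "(0, 1)" _ "[]"] by (simp add: pb)
    also have "\<dots> = D [(p, 0), (0, 1)] q" by (rule lin_sum_basis[OF linD1[OF q]])
    also have "\<dots> = dFf q (p, 0)" by (rule Dt[OF q])
    finally show ?thesis .
  qed
  have dG: "dGf q (p, 0) = 2 * H p p"
  proof -
    have "dGf q (p, 0) = 2 * (\<Sum>b\<in>Basis. (p \<bullet> b) * H p b)"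
      unfolding dGf_def H_def by (simp add: pb sum_distrib_left mult.assoc)
    then show ?thesis using bil_sum_r[OF bH] by simp
  qed
  have dN: "dNf q (p, 0) = J p p + 2 * (\<Sum>b\<in>Basis. (H p b)\<^sup>2)"
  proof -
    have e: "dNf q (p, 0) = (\<Sum>b\<in>Basis. \<Sum>c\<in>Basis. (p \<bullet> b) * ((p \<bullet> c) * J b c))
       + (\<Sum>b\<in>Basis. \<Sum>c\<in>Basis. (p \<bullet> b) * (H p c * H b c))
       + (\<Sum>b\<in>Basis. \<Sum>c\<in>Basis. H p b * ((p \<bullet> c) * H b c))"
      unfolding dNf_def H_def J_def by (simp add: pb sum.distrib algebra_simps)
    have e1: "(\<Sum>b\<in>Basis. \<Sum>c\<in>Basis. (p \<bullet> b) * ((p \<bullet> c) * J b c)) = J p p"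
      by (simp add: sum_distrib_left[symmetric] bil_sum_r[OF bJ] bil_sum_l[OF bJ])
    have e2: "(\<Sum>b\<in>Basis. \<Sum>c\<in>Basis. (p \<bullet> b) * (H p c * H b c)) = (\<Sum>b\<in>Basis. (H p b)\<^sup>2)"
    proof -
      have "(\<Sum>b\<in>Basis. \<Sum>c\<in>Basis. (p \<bullet> b) * (H p c * H b c)) = (\<Sum>c\<in>Basis. \<Sum>b\<in>Basis. (p \<bullet> b) * (H p c * H b c))"
        by (rule sum.swap)
      also have "\<dots> = (\<Sum>c\<in>Basis. H p c * (\<Sum>b\<in>Basis. (p \<bullet> b) * H b c))"
        by (simp add: sum_distrib_left algebra_simps)
      also have "\<dots> = (\<Sum>c\<in>Basis. (H p c)\<^sup>2)" by (simp add: bil_sum_l[OF bH] power2_eq_square)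
      finally show ?thesis .
    qed
    have e3: "(\<Sum>b\<in>Basis. \<Sum>c\<in>Basis. H p b * ((p \<bullet> c) * H b c)) = (\<Sum>b\<in>Basis. (H p b)\<^sup>2)"
      by (simp add: sum_distrib_left[symmetric] bil_sum_r[OF bH] power2_eq_square sH[of _ p])
    show ?thesis unfolding e e1 e2 e3 by simp
  qed
  have eta: "Af q (0, 1) = (\<Sum>b\<in>Basis. J b b) - (2 * (\<Sum>b\<in>Basis. (H p b)\<^sup>2) + J p p) / v\<^sup>2 + 2 * (H p p)\<^sup>2 / v^4"
  proof -
    have s1: "(\<Sum>b\<in>Basis. D [(p, 0), (b, 0), (b, 0)] q) = (\<Sum>b\<in>Basis. J b b)" unfolding J_def ..
    show ?thesis unfolding Aft dFf_def s1 dG dN Npp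
      by (rule uu_alg2[OF vn vsq])
  qed
  have wt: "\<epsilon> \<le> uu\<^sup>2 * ((\<Sum>b\<in>Basis. J b b) - (2 * (\<Sum>b\<in>Basis. (H p b)\<^sup>2) + J p p) / v\<^sup>2 + 2 * (H p p)\<^sup>2 / v^4) / v
                 + 2 * uu * v * ((\<Sum>b\<in>Basis. H b b) - H p p / v\<^sup>2)"
    using wt0 unfolding dWf_A eta tau vV uu_def[symmetric] by (simp add: algebra_simps)
  have uneg: "uu < 0" using Uq unfolding uu_def .
  note c2 = crit[unfolded v_def]
  note h2 = hess[unfolded v_def]
  note w2 = wt[unfolded v_def]
  show False
    by (rule alg_core[OF bH bJ sH uneg c2 h2 w2 eps])
qed

end

context SA begin

lemma W_pos_iff: "W q > 0 \<longleftrightarrow> U q \<noteq> 0"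
  unfolding W_def using V_pos[of q] by (simp add: zero_less_mult_iff)

lemma contonK: "K \<subseteq> \<Omega> \<Longrightarrow> continuous_on K (\<lambda>q. W q - \<epsilon> * snd q)"
proof -
  assume K: "K \<subseteq> \<Omega>"
  show ?thesis unfolding continuous_on_eq_continuous_within
  proof
    fix x assume "x \<in> K"
    then have x: "x \<in> \<Omega>" using K by auto
    have "continuous (at x within \<Omega>) (\<lambda>q. W q - \<epsilon> * snd q)"
      by (intro continuous_intros contW[OF x])
    then show "continuous (at x within K) (\<lambda>q. W q - \<epsilon> * snd q)"
      using continuous_within_subset K by blast
  qed
qed

lemma MP:
  assumes c: "c \<ge> 0" and hyp: "\<And>y. (y, 0) \<in> \<Omega> \<Longrightarrow> U (y, 0) < 0 \<Longrightarrow> W (y, 0) \<le> c"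
    and q0: "q0 \<in> \<Omega>" and Uq0: "U q0 < 0"
  shows "W q0 \<le> c"
proof (rule ccontr)
  assume "\<not> W q0 \<le> c"
  then have Wc: "W q0 > c" by simp
  define t0 where "t0 = snd q0"
  have t00: "t0 \<ge> 0" unfolding t0_def using sub[OF q0] .
  have t0: "t0 > 0"
  proof (rule ccontr)
    assume "\<not> t0 > 0"
    then have "t0 = 0" using t00 by simp
    then have e: "q0 = (fst q0, 0)" unfolding t0_def by (simp add: prod_eq_iff)
    have "W (fst q0, 0) \<le> c" using hyp[of "fst q0"] q0 Uq0 e by metis
    moreover have "W q0 = W (fst q0, 0)" using arg_cong[OF e, of W] .
    ultimately show False using Wc by simp
  qed
  define \<epsilon> where "\<epsilon> = (W q0 - c) / (2 * t0)"
  have eps: "\<epsilon> > 0" unfolding \<epsilon>_def using Wc t0 by simp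
  define \<delta> where "\<delta> = W q0 - \<epsilon> * t0"
  have \<delta>: "\<delta> = (W q0 + c) / 2" unfolding \<delta>_def \<epsilon>_def using t0 by (simp add: field_simps)
  have \<delta>c: "\<delta> > c" using Wc unfolding \<delta> by simp
  have \<delta>0: "\<delta> > 0" using \<delta>c c by simp
  define K where "K = {q\<in>\<Omega>. snd q \<le> t0 \<and> U q \<le> 0 \<and> \<delta> \<le> W q - \<epsilon> * snd q}"
  have cK: "compact K" unfolding K_def by (rule compactK) (use t00 eps \<delta>0 in auto)
  have q0K: "q0 \<in> K" unfolding K_def \<delta>_def t0_def using q0 Uq0 by simp
  have KO: "K \<subseteq> \<Omega>" unfolding K_def by auto
  obtain qs where qsK: "qs \<in> K" and qmax: "\<And>y. y \<in> K \<Longrightarrow> W y - \<epsilon> * snd y \<le> W qs - \<epsilon> * snd qs"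
    using continuous_attains_sup[OF cK _ contonK[OF KO]] q0K by blast
  have qsO: "qs \<in> \<Omega>" and qsT: "snd qs \<le> t0" and qsU: "U qs \<le> 0" and qsd: "\<delta> \<le> W qs - \<epsilon> * snd qs"
    using qsK unfolding K_def by auto
  have snn: "snd qs \<ge> 0" using sub[OF qsO] .
  have "W qs > 0" using qsd \<delta>0 eps snn by (smt (verit) mult_nonneg_nonneg)
  then have "U qs \<noteq> 0" using W_pos_iff by simp
  then have Uqs: "U qs < 0" using qsU by simp
  have sqs: "snd qs > 0"
  proof (rule ccontr)
    assume "\<not> snd qs > 0"
    then have "snd qs = 0" using snn by simp
    then have e: "qs = (fst qs, 0)" by (simp add: prod_eq_iff)
    have "W (fst qs, 0) \<le> c" using hyp[of "fst qs"] qsO Uqs e by metis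
    moreover have "W qs > c" using qsd \<delta>c \<open>snd qs = 0\<close> by simp
    moreover have "W qs = W (fst qs, 0)" using arg_cong[OF e, of W] .
    ultimately show False by simp
  qed
  have qsP: "qs \<in> PP" unfolding PP_def using qsO sqs by simp
  obtain r1 where r1: "r1 > 0" "ball qs r1 \<subseteq> PP" using openPP qsP open_contains_ball by blast
  have "isCont U qs" using contU[OF qsO] unfolding atPP[OF qsP] continuous_at .
  then have "eventually (\<lambda>y. U y < 0) (at qs)"
    unfolding isCont_def using Uqs order_tendstoD(2) by blast
  then obtain r2 where r2: "r2 > 0" and r2U: "\<And>y. y \<noteq> qs \<Longrightarrow> dist y qs < r2 \<Longrightarrow> U y < 0"
    unfolding eventually_at by blast
  define r where "r = min r1 r2"
  have r: "r > 0" using r1 r2 unfolding r_def by simp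
  have bl: "ball qs r \<subseteq> PP" using r1 unfolding r_def by auto
  have loc: "W y - \<epsilon> * snd y \<le> W qs - \<epsilon> * snd qs" if y: "dist y qs < r" "snd y \<le> snd qs" for y
  proof (cases "y = qs")
    case True then show ?thesis by simp
  next
    case False
    have yP: "y \<in> PP" using bl y by (auto simp: dist_commute)
    then have yO: "y \<in> \<Omega>" using PP_sub by auto
    have Uy: "U y < 0" using r2U[OF False] y unfolding r_def by simp
    show ?thesis
    proof (cases "\<delta> \<le> W y - \<epsilon> * snd y")
      case True
      then have "y \<in> K" unfolding K_def using yO Uy y qsT by auto
      then show ?thesis by (rule qmax)
    next
      case False
      then show ?thesis using qsd by simp
    qed
  qed
  show False by (rule maxpt_false[OF qsP Uqs r bl eps loc])
qed

end

theorem theorem5p3: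
  fixes \<Omega> :: "('a::euclidean_space \<times> real) set" and u :: "'a \<Rightarrow> real \<Rightarrow> real"
  assumes "standing_assumption \<Omega> u"
  defines "w \<equiv> (\<lambda>p. vfac (\<lambda>q. u (fst q) (snd q)) \<Omega> p * (u (fst p) (snd p))\<^sup>2)"
  shows "\<forall>x t. (x, t) \<in> \<Omega> \<and> u x t < 0 \<longrightarrow>
           (\<exists>y. (y, 0) \<in> \<Omega> \<and> u y 0 < 0
              \<and> (\<forall>z. (z, 0) \<in> \<Omega> \<and> u z 0 < 0 \<longrightarrow> w (z, 0) \<le> w (y, 0))
              \<and> w (x, t) \<le> w (y, 0))"
proof -
  interpret SA \<Omega> u by unfold_locales (rule assms(1))
  have wW: "w p = W p" for p
    unfolding w_def W_def vfac_eq[symmetric] U_def by simp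
  have Uu: "U (x, t) = u x t" for x t unfolding U_def by simp
  show ?thesis unfolding wW
  proof (intro allI impI)
    fix x t assume xt: "(x, t) \<in> \<Omega> \<and> u x t < 0"
    have xO: "(x, t) \<in> \<Omega>" and xU: "U (x, t) < 0" using xt Uu by auto
    have "\<exists>y0. (y0, 0) \<in> \<Omega> \<and> U (y0, 0) < 0"
    proof (rule ccontr)
      assume none: "\<not> (\<exists>y0. (y0, 0) \<in> \<Omega> \<and> U (y0, 0) < 0)"
      have "W (x, t) \<le> 0" by (rule MP[OF order_refl _ xO xU]) (use none in auto)
      moreover have "W (x, t) > 0" using W_pos_iff xU by simp
      ultimately show False by simp
    qed
    then obtain y0 where y0: "(y0, 0) \<in> \<Omega>" "U (y0, 0) < 0" by blast
    define \<delta> where "\<delta> = W (y0, 0)"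
    have \<delta>0: "\<delta> > 0" unfolding \<delta>_def using W_pos_iff y0 by simp
    define K where "K = {q\<in>\<Omega>. snd q \<le> 0 \<and> U q \<le> 0 \<and> \<delta> \<le> W q - 0 * snd q}"
    have cK: "compact K" unfolding K_def by (rule compactK) (use \<delta>0 in auto)
    have y0K: "(y0, 0) \<in> K" unfolding K_def \<delta>_def using y0 by simp
    have KO: "K \<subseteq> \<Omega>" unfolding K_def by auto
    obtain ys where ysK: "ys \<in> K" and ymax: "\<And>y. y \<in> K \<Longrightarrow> W y - 0 * snd y \<le> W ys - 0 * snd ys"
      using continuous_attains_sup[OF cK _ contonK[OF KO]] y0K by blast
    have ysO: "ys \<in> \<Omega>" and ysT: "snd ys \<le> 0" and ysU: "U ys \<le> 0" and ysd: "\<delta> \<le> W ys"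
      using ysK unfolding K_def by auto
    have "snd ys = 0" using sub[OF ysO] ysT by simp
    then have e: "ys = (fst ys, 0)" by (simp add: prod_eq_iff)
    have "W ys > 0" using ysd \<delta>0 by simp
    then have "U ys \<noteq> 0" using W_pos_iff by simp
    then have Uys: "U ys < 0" using ysU by simp
    have best: "W (z, 0) \<le> W ys" if z: "(z, 0) \<in> \<Omega>" "U (z, 0) < 0" for z
    proof (cases "\<delta> \<le> W (z, 0)")
      case True
      then have "(z, 0) \<in> K" unfolding K_def using z by simp
      then show ?thesis using ymax by fastforce
    next
      case False then show ?thesis using ysd by simp
    qed
    have cW: "W ys \<ge> 0" using ysd \<delta>0 by simp
    have "W (x, t) \<le> W ys" by (rule MP[OF cW best xO xU])
    show "\<exists>y. (y, 0) \<in> \<Omega> \<and> u y 0 < 0 \<and> (\<forall>z. (z, 0) \<in> \<Omega> \<and> u z 0 < 0 \<longrightarrow> W (z, 0) \<le> W (y, 0)) \<and> W (x, t) \<le> W (y, 0)"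
    proof (intro exI[of _ "fst ys"] conjI allI impI)
      show "(fst ys, 0) \<in> \<Omega>" using ysO e by metis
      show "u (fst ys) 0 < 0" using Uys e Uu by metis
      show "W (z, 0) \<le> W (fst ys, 0)" if "(z, 0) \<in> \<Omega> \<and> u z 0 < 0" for z
        using best[of z] that Uu e by metis
      show "W (x, t) \<le> W (fst ys, 0)" using \<open>W (x, t) \<le> W ys\<close> e by metis
    qed
  qed
qed


end
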